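(* Suppose every constraint function of the DCOP takes values in $\{0,1\}$, i.e. $f_{ij}:D_i\times D_j\to\{0,1\}$ for all constraints. Then for any evaporation rate $\gamma$, the DGLS variants $(A,\gamma,cel)$ and $(M,\gamma,cel)$ described in the context are equivalent: when run from the same initial assignment with the same random choices, in every round $k$ and for all agents $i$, neighbors $j$ and values $d_i\in D_i,d_j\in D_j$, the additive and multiplicative effective costs coincide, $\mathrm{EffCost}^{(k)}_A(d_i,j,d_j)=\mathrm{EffCost}^{(k)}_M(d_i,j,d_j)$ (so the two variants make identical decisions).
   Context: A (binary) Distributed Constraint Optimization Problem (DCOP) consists of agents $1,\dots,n$, each controlling one variable $x_i$ with finite domain $D_i$, and binary constraint functions $f_{ij}:D_i\times D_j\to\mathbb{R}_{\ge0}$ with $f_{ji}=f_{ij}^T$; $\mathcal{N}_i$ is the set of neighbors of $i$. Write $\check f_{ij}=\min f_{ij}$, $\hat f_{ij}=\max f_{ij}$. DGLS is parameterized by a tuple (manner, $\gamma$, scope): manner additive $A$ or multiplicative $M$, evaporation rate $\gamma$, scope among $cel$, $tab$, $row$, $col$; only $cel$ is needed here. Each agent $i$ keeps, for each $j\in\mathcal{N}_i$, a cost modifier $M_{ij}$ (a $|D_i|\times|D_j|$ real matrix), initialized to $0$. The effective cost is $\mathrm{EffCost}_A(d_i,j,d_j)=f_{ij}(d_i,d_j)+M_{ij}(d_i,d_j)$ (additive) or $\mathrm{EffCost}_M(d_i,j,d_j)=f_{ij}(d_i,d_j)\cdot[1+M_{ij}(d_i,d_j)]$ (multiplicative). Initially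 each agent picks a random value $d_i\in D_i$ and sends it to its neighbors. Rounds are synchronous; in each round agent $i$: (1) sets $\bar P_i=\emptyset$ and receives the neighbors' current values $d_j$; (2) computes $d_i^*\in\arg\min_{d\in D_i}\sum_{j\in\mathcal{N}_i}\mathrm{EffCost}(d,j,d_j)$ and gain $\Delta_i=\sum_{j}[\mathrm{EffCost}(d_i,j,d_j)-\mathrm{EffCost}(d_i^*,j,d_j)]$, and exchanges gains with neighbors; (3) if $\Delta_i>0$ and $\Delta_i$ is the best improvement among itself and its neighbors, it sets $d_i\gets d_i^*$; otherwise, if no neighbor can improve (all neighbors' gains are $\le 0$), then for each $j\in\mathcal{N}_i$ it declares $f_{ij}$ violated with probability $\eta=\frac{f_{ij}(d_i,d_j)-\check f_{ij}}{\hat f_{ij}-\check f_{ij}}$, and for each violated one adds $j$ to $\bar P_i$ and sends a SYNC message to $j$; (4) lets $\tilde P_i$ be the set of neighbors from which it received SYNC this round; (5) for each $j\in\mathcal{N}_i$: first evaporates, $M_{ij}\gets\gamma M_{ij}$ entrywise, then (scope $cel$) if $j\in\bar P_i\cup\tilde P_i$, sets $M_{ij}(d_i,d_j)\gets M_{ij}(d_i,d_j)+1$ at the current values $d_i,d_j$; (6) sends its value $d_i$ to its neighbors. *)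

theory Defs
  imports Complex_Main
begin

text \<open>Agents have type 'a (linearly ordered, the
order is used for tie-breaking among equal gains), values have type 'v.\<close>

datatype manner = Add | Mult

type_synonym ('a, 'v) modifiers = "'a \<Rightarrow> 'a \<Rightarrow> 'v \<Rightarrow> 'v \<Rightarrow> real"
type_synonym ('a, 'v) dstate = "('a \<Rightarrow> 'v) \<times> ('a, 'v) modifiers"

definition effcost :: "manner \<Rightarrow> ('a \<Rightarrow> 'a \<Rightarrow> 'v \<Rightarrow> 'v \<Rightarrow> real) \<Rightarrow> ('a, 'v) modifiers
    \<Rightarrow> 'a \<Rightarrow> 'v \<Rightarrow> 'a \<Rightarrow> 'v \<Rightarrow> real" where
  "effcost m f M i di j dj =
     (case m of Add \<Rightarrow> f i j di dj + M i j di dj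
              | Mult \<Rightarrow> f i j di dj * (1 + M i j di dj))"

definition fmin :: "('a \<Rightarrow> 'v set) \<Rightarrow> ('a \<Rightarrow> 'a \<Rightarrow> 'v \<Rightarrow> 'v \<Rightarrow> real) \<Rightarrow> 'a \<Rightarrow> 'a \<Rightarrow> real" where
  "fmin D f i j = Min ((\<lambda>p. f i j (fst p) (snd p)) ` (D i \<times> D j))"

definition fmax :: "('a \<Rightarrow> 'v set) \<Rightarrow> ('a \<Rightarrow> 'a \<Rightarrow> 'v \<Rightarrow> 'v \<Rightarrow> real) \<Rightarrow> 'a \<Rightarrow> 'a \<Rightarrow> real" where
  "fmax D f i j = Max ((\<lambda>p. f i j (fst p) (snd p)) ` (D i \<times> D j))"

text \<open>Violation probability eta (with Isabelle's convention x / 0 = 0 when f_ij is constant).\<close>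
definition eta :: "('a \<Rightarrow> 'v set) \<Rightarrow> ('a \<Rightarrow> 'a \<Rightarrow> 'v \<Rightarrow> 'v \<Rightarrow> real) \<Rightarrow> ('a \<Rightarrow> 'v)
    \<Rightarrow> 'a \<Rightarrow> 'a \<Rightarrow> real" where
  "eta D f x i j = (f i j (x i) (x j) - fmin D f i j) / (fmax D f i j - fmin D f i j)"

text \<open>Randomness of the round: u i j is the uniform draw
in [0,1) used by agent i for constraint f_ij (violated iff u i j < eta);
tb i S is the tie-breaking choice of agent i from its (nonempty) argmin set S.\<close>
definition dgls_step :: "manner \<Rightarrow> ('a::linorder \<Rightarrow> 'v set) \<Rightarrow> ('a \<Rightarrow> 'a set)
    \<Rightarrow> ('a \<Rightarrow> 'a \<Rightarrow> 'v \<Rightarrow> 'v \<Rightarrow> real) \<Rightarrow> real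
    \<Rightarrow> ('a \<Rightarrow> 'a \<Rightarrow> real) \<Rightarrow> ('a \<Rightarrow> 'v set \<Rightarrow> 'v)
    \<Rightarrow> ('a, 'v) dstate \<Rightarrow> ('a, 'v) dstate" where
  "dgls_step m D N f \<gamma> u tb st =
    (let x = fst st; M = snd st;
         C = (\<lambda>i d. \<Sum>j\<in>N i. effcost m f M i d j (x j));
         ds = (\<lambda>i. tb i {d \<in> D i. \<forall>d'\<in>D i. C i d \<le> C i d'});
         \<Delta> = (\<lambda>i. C i (x i) - C i (ds i));
         mv = (\<lambda>i. \<Delta> i > 0 \<and> (\<forall>j\<in>N i. \<Delta> j < \<Delta> i \<or> (\<Delta> j = \<Delta> i \<and> i < j)));
         stuck = (\<lambda>i. \<forall>j\<in>N i. \<Delta> j \<le> 0);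
         viol = (\<lambda>i j. \<not> mv i \<and> stuck i \<and> u i j < eta D f x i j);
         x' = (\<lambda>i. if mv i then ds i else x i);
         M' = (\<lambda>i j a b. \<gamma> * M i j a b +
                 (if j \<in> N i \<and> (viol i j \<or> viol j i) \<and> a = x i \<and> b = x j then 1 else 0))
     in (x', M'))"

primrec dgls_run :: "manner \<Rightarrow> ('a::linorder \<Rightarrow> 'v set) \<Rightarrow> ('a \<Rightarrow> 'a set)
    \<Rightarrow> ('a \<Rightarrow> 'a \<Rightarrow> 'v \<Rightarrow> 'v \<Rightarrow> real) \<Rightarrow> real
    \<Rightarrow> (nat \<Rightarrow> 'a \<Rightarrow> 'a \<Rightarrow> real) \<Rightarrow> (nat \<Rightarrow> 'a \<Rightarrow> 'v set \<Rightarrow> 'v)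
    \<Rightarrow> ('a \<Rightarrow> 'v) \<Rightarrow> nat \<Rightarrow> ('a, 'v) dstate" where
  "dgls_run m D N f \<gamma> u tb x0 0 = (x0, (\<lambda>_ _ _ _. 0))"
| "dgls_run m D N f \<gamma> u tb x0 (Suc k) =
     dgls_step m D N f \<gamma> (u k) (tb k) (dgls_run m D N f \<gamma> u tb x0 k)"

end

theory Submission
  imports Defs
begin

definition selg :: "('a \<Rightarrow> 'v set) \<Rightarrow> ('a \<Rightarrow> 'v set \<Rightarrow> 'v) \<Rightarrow> ('a \<Rightarrow> 'v \<Rightarrow> real) \<Rightarrow> 'a \<Rightarrow> 'v" where
  "selg D tb C i = tb i {d \<in> D i. \<forall>d'\<in>D i. C i d \<le> C i d'}"

definition gaing :: "('a \<Rightarrow> 'v set) \<Rightarrow> ('a \<Rightarrow> 'v set \<Rightarrow> 'v) \<Rightarrow> ('a \<Rightarrow> 'v \<Rightarrow> real) \<Rightarrow> ('a \<Rightarrow> 'v) \<Rightarrow> 'a \<Rightarrow> real" where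
  "gaing D tb C x i = C i (x i) - C i (selg D tb C i)"

definition mvg :: "('a::linorder \<Rightarrow> 'a set) \<Rightarrow> ('a \<Rightarrow> real) \<Rightarrow> 'a \<Rightarrow> bool" where
  "mvg N g i = (g i > 0 \<and> (\<forall>j\<in>N i. g j < g i \<or> (g j = g i \<and> i < j)))"

definition violg :: "('a::linorder \<Rightarrow> 'v set) \<Rightarrow> ('a \<Rightarrow> 'a set) \<Rightarrow> ('a \<Rightarrow> 'a \<Rightarrow> 'v \<Rightarrow> 'v \<Rightarrow> real)
   \<Rightarrow> ('a \<Rightarrow> 'a \<Rightarrow> real) \<Rightarrow> ('a \<Rightarrow> real) \<Rightarrow> ('a \<Rightarrow> 'v) \<Rightarrow> 'a \<Rightarrow> 'a \<Rightarrow> bool" where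
  "violg D N f u g x i j = (\<not> mvg N g i \<and> (\<forall>j\<in>N i. g j \<le> 0) \<and> u i j < eta D f x i j)"

lemma step_eq:
  "dgls_step m D N f \<gamma> u tb (x, M) =
    (let C = (\<lambda>i d. \<Sum>j\<in>N i. effcost m f M i d j (x j)); g = gaing D tb C x in
     ((\<lambda>i. if mvg N g i then selg D tb C i else x i),
      (\<lambda>i j a b. \<gamma> * M i j a b +
                 (if j \<in> N i \<and> (violg D N f u g x i j \<or> violg D N f u g x j i) \<and> a = x i \<and> b = x j then 1 else 0))))"
  unfolding dgls_step_def selg_def gaing_def mvg_def violg_def Let_def fst_conv snd_conv by (rule refl)

lemma selg_cong:
  assumes "\<And>i d. d \<in> D i \<Longrightarrow> C1 i d = C2 i d"
  shows "selg D tb C1 = selg D tb C2"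
proof -
  have "\<And>i. {d \<in> D i. \<forall>d'\<in>D i. C1 i d \<le> C1 i d'} = {d \<in> D i. \<forall>d'\<in>D i. C2 i d \<le> C2 i d'}"
    using assms by auto
  then show ?thesis unfolding selg_def by auto
qed

lemma selg_in:
  assumes "finite (D i)" "D i \<noteq> {}" "\<And>S. S \<noteq> {} \<Longrightarrow> tb i S \<in> S"
  shows "selg D tb C i \<in> D i"
proof -
  obtain d where "d \<in> D i" "\<forall>d'\<in>D i. C i d \<le> C i d'"
    using ex_min_if_finite[of "(\<lambda>d. C i d) ` D i"] assms(1,2)
    by (metis (no_types, lifting) Min_le arg_min_if_finite(1) arg_min_least finite_imageI image_is_empty)
  then have "{d \<in> D i. \<forall>d'\<in>D i. C i d \<le> C i d'} \<noteq> {}" by auto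
  from assms(3)[OF this] show ?thesis unfolding selg_def by auto
qed

lemma gaing_cong:
  assumes "\<And>i d. d \<in> D i \<Longrightarrow> C1 i d = C2 i d" "\<And>i. x i \<in> D i"
    and "\<And>i. finite (D i)" "\<And>i. D i \<noteq> {}" "\<And>i S. S \<noteq> {} \<Longrightarrow> tb i S \<in> S"
  shows "gaing D tb C1 x = gaing D tb C2 x"
proof
  fix i
  have s: "selg D tb C1 i = selg D tb C2 i" using selg_cong[of D C1 C2 tb] assms(1) by simp
  have "selg D tb C2 i \<in> D i" using selg_in assms(3-5) by metis
  then show "gaing D tb C1 x i = gaing D tb C2 x i"
    unfolding gaing_def s using assms(1,2) by simp
qed

lemma eta_zero:
  assumes "j \<in> N i" "x i \<in> D i" "x j \<in> D j" "f i j (x i) (x j) = 0"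
    and fin: "finite (D i)" "finite (D j)"
    and bin: "\<And>a b. a \<in> D i \<Longrightarrow> b \<in> D j \<Longrightarrow> f i j a b \<in> {0, 1}"
  shows "eta D f x i j = 0"
proof -
  let ?S = "(\<lambda>p. f i j (fst p) (snd p)) ` (D i \<times> D j)"
  have "0 \<in> ?S" using assms(2-4) by (auto intro!: image_eqI[where x="(x i, x j)"])
  moreover have "\<forall>y\<in>?S. 0 \<le> y" using bin by fastforce
  moreover have "finite ?S" using fin by simp
  ultimately have "Min ?S = 0" by (meson Min_eqI)
  then show ?thesis unfolding eta_def fmin_def using assms(4) by simp
qed

theorem theorem3:
  fixes D :: "'a::linorder \<Rightarrow> 'v set" and N :: "'a \<Rightarrow> 'a set"
    and f :: "'a \<Rightarrow> 'a \<Rightarrow> 'v \<Rightarrow> 'v \<Rightarrow> real" and \<gamma> :: real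
    and u :: "nat \<Rightarrow> 'a \<Rightarrow> 'a \<Rightarrow> real" and tb :: "nat \<Rightarrow> 'a \<Rightarrow> 'v set \<Rightarrow> 'v"
    and x0 :: "'a \<Rightarrow> 'v"
  assumes finN: "\<And>i. finite (N i)"
    and irrefl: "\<And>i. i \<notin> N i"
    and symN: "\<And>i j. j \<in> N i \<longleftrightarrow> i \<in> N j"
    and finD: "\<And>i. finite (D i)" and neD: "\<And>i. D i \<noteq> {}"
    and transp: "\<And>i j a b. j \<in> N i \<Longrightarrow> a \<in> D i \<Longrightarrow> b \<in> D j \<Longrightarrow> f j i b a = f i j a b"
    and binary: "\<And>i j a b. j \<in> N i \<Longrightarrow> a \<in> D i \<Longrightarrow> b \<in> D j \<Longrightarrow> f i j a b \<in> {0, 1}"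
    and x0D: "\<And>i. x0 i \<in> D i"
    and tbS: "\<And>k i S. S \<noteq> {} \<Longrightarrow> tb k i S \<in> S"
    and urange: "\<And>k i j. 0 \<le> u k i j \<and> u k i j < 1"
  shows "\<forall>k. (\<forall>i. \<forall>j\<in>N i. \<forall>di\<in>D i. \<forall>dj\<in>D j.
              effcost Add f (snd (dgls_run Add D N f \<gamma> u tb x0 k)) i di j dj
            = effcost Mult f (snd (dgls_run Mult D N f \<gamma> u tb x0 k)) i di j dj)
          \<and> fst (dgls_run Add D N f \<gamma> u tb x0 k) = fst (dgls_run Mult D N f \<gamma> u tb x0 k)"
proof -
  define Inv where "Inv = (\<lambda>(x::'a \<Rightarrow> 'v) (MA::('a,'v) modifiers) (MM::('a,'v) modifiers).
     (\<forall>i. x i \<in> D i) \<and> (\<forall>i. \<forall>j\<in>N i. \<forall>a\<in>D i. \<forall>b\<in>D j.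
        (f i j a b = 1 \<longrightarrow> MA i j a b = MM i j a b) \<and> (f i j a b = 0 \<longrightarrow> MA i j a b = 0)))"
  have eff: "effcost Add f MA i a j b = effcost Mult f MM i a j b"
    if "Inv x MA MM" "j \<in> N i" "a \<in> D i" "b \<in> D j" for x MA MM i j a b
  proof -
    have "f i j a b \<in> {0,1}" using binary that(2-4) by blast
    then show ?thesis using that unfolding Inv_def effcost_def by auto
  qed
  have stepI: "Inv (fst (dgls_step Add D N f \<gamma> (u k) (tb k) (x, MA)))
                   (snd (dgls_step Add D N f \<gamma> (u k) (tb k) (x, MA)))
                   (snd (dgls_step Mult D N f \<gamma> (u k) (tb k) (x, MM)))
           \<and> fst (dgls_step Add D N f \<gamma> (u k) (tb k) (x, MA))
             = fst (dgls_step Mult D N f \<gamma> (u k) (tb k) (x, MM))"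
    if I: "Inv x MA MM" for x MA MM k
  proof -
    define CA where "CA = (\<lambda>i d. \<Sum>j\<in>N i. effcost Add f MA i d j (x j))"
    define CM where "CM = (\<lambda>i d. \<Sum>j\<in>N i. effcost Mult f MM i d j (x j))"
    have xD: "\<And>i. x i \<in> D i" using I unfolding Inv_def by auto
    have C: "CA i d = CM i d" if "d \<in> D i" for i d
      unfolding CA_def CM_def
      by (rule sum.cong[OF refl]) (rule eff[OF I _ that xD])
    have sel: "selg D (tb k) CA = selg D (tb k) CM" using selg_cong[of D CA CM "tb k"] C by simp
    have g: "gaing D (tb k) CA x = gaing D (tb k) CM x"
      using gaing_cong[of D CA CM x "tb k"] C xD finD neD tbS by blast
    define g where "g = gaing D (tb k) CM x"
    have selD: "selg D (tb k) CM i \<in> D i" for i using selg_in finD neD tbS by metis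
    have sA: "dgls_step Add D N f \<gamma> (u k) (tb k) (x, MA) =
      ((\<lambda>i. if mvg N g i then selg D (tb k) CM i else x i),
      (\<lambda>i j a b. \<gamma> * MA i j a b +
                 (if j \<in> N i \<and> (violg D N f (u k) g x i j \<or> violg D N f (u k) g x j i) \<and> a = x i \<and> b = x j then 1 else 0)))"
      unfolding step_eq Let_def CA_def[symmetric] g g_def sel by (rule refl)
    have sM: "dgls_step Mult D N f \<gamma> (u k) (tb k) (x, MM) =
      ((\<lambda>i. if mvg N g i then selg D (tb k) CM i else x i),
      (\<lambda>i j a b. \<gamma> * MM i j a b +
                 (if j \<in> N i \<and> (violg D N f (u k) g x i j \<or> violg D N f (u k) g x j i) \<and> a = x i \<and> b = x j then 1 else 0)))"
      unfolding step_eq Let_def CM_def[symmetric] g_def by (rule refl)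
    have nov: "\<not> (violg D N f (u k) g x i j \<or> violg D N f (u k) g x j i)"
      if "j \<in> N i" "f i j (x i) (x j) = 0" for i j
    proof -
      have ij: "eta D f x i j = 0"
        by (rule eta_zero[where N=N]) (use that xD finD binary in auto)
      have ji0: "f j i (x j) (x i) = 0" using transp[OF that(1) xD xD] that(2) by simp
      have iNj: "i \<in> N j" using symN that(1) by blast
      have ji: "eta D f x j i = 0"
        by (rule eta_zero[where N=N]) (use ji0 iNj xD finD binary in auto)
      show ?thesis unfolding violg_def ij ji using urange[of k] by (simp add: not_less)
    qed
    show ?thesis
      unfolding sA sM fst_conv snd_conv Inv_def
    proof (intro conjI allI ballI impI)
      fix i show "(if mvg N g i then selg D (tb k) CM i else x i) \<in> D i" using selD xD by simp
    next
      fix i j a b assume "j \<in> N i" "a \<in> D i" "b \<in> D j" "f i j a b = 1"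
      then show "\<gamma> * MA i j a b +
         (if j \<in> N i \<and> (violg D N f (u k) g x i j \<or> violg D N f (u k) g x j i) \<and> a = x i \<and> b = x j then 1 else 0) =
         \<gamma> * MM i j a b +
         (if j \<in> N i \<and> (violg D N f (u k) g x i j \<or> violg D N f (u k) g x j i) \<and> a = x i \<and> b = x j then 1 else 0)"
        using I unfolding Inv_def by auto
    next
      fix i j a b assume as: "j \<in> N i" "a \<in> D i" "b \<in> D j" "f i j a b = 0"
      have "MA i j a b = 0" using I as unfolding Inv_def by auto
      moreover have "\<not> (j \<in> N i \<and> (violg D N f (u k) g x i j \<or> violg D N f (u k) g x j i) \<and> a = x i \<and> b = x j)"
        using nov as by blast
      ultimately show "\<gamma> * MA i j a b +
         (if j \<in> N i \<and> (violg D N f (u k) g x i j \<or> violg D N f (u k) g x j i) \<and> a = x i \<and> b = x j then 1 else 0) = 0"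
        by simp
    qed simp
  qed
  have main: "Inv (fst (dgls_run Add D N f \<gamma> u tb x0 k)) (snd (dgls_run Add D N f \<gamma> u tb x0 k))
                  (snd (dgls_run Mult D N f \<gamma> u tb x0 k))
            \<and> fst (dgls_run Add D N f \<gamma> u tb x0 k) = fst (dgls_run Mult D N f \<gamma> u tb x0 k)" for k
  proof (induction k)
    case 0
    then show ?case using x0D unfolding Inv_def by simp
  next
    case (Suc k)
    obtain x MA where A: "dgls_run Add D N f \<gamma> u tb x0 k = (x, MA)" by (cases "dgls_run Add D N f \<gamma> u tb x0 k")
    obtain x' MM where M: "dgls_run Mult D N f \<gamma> u tb x0 k = (x', MM)" by (cases "dgls_run Mult D N f \<gamma> u tb x0 k")
    from Suc A M have "x' = x" "Inv x MA MM" by auto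
    then show ?case using stepI[of x MA MM k] A M by (metis dgls_run.simps(2))
  qed
  show ?thesis
  proof (intro allI conjI ballI)
    fix k i j di dj assume "j \<in> N i" "di \<in> D i" "dj \<in> D j"
    then show "effcost Add f (snd (dgls_run Add D N f \<gamma> u tb x0 k)) i di j dj
            = effcost Mult f (snd (dgls_run Mult D N f \<gamma> u tb x0 k)) i di j dj"
      using eff main by blast
  next
    fix k show "fst (dgls_run Add D N f \<gamma> u tb x0 k) = fst (dgls_run Mult D N f \<gamma> u tb x0 k)"
      using main by blast
  qed
qed

end
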